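(* Let $\theta\in(\mathbb{R}^N_{>0})^R$ and $w\in\mathbb{R}^N_{>0}$ be positive vectors. Let $y\in\mathcal{B}$ and let $z$ be a point of the base polytope of the submodular function $F=\sum_{r\in[R]}F_r$. Then there exists $\xi\in\mathcal{B}$ such that $A\xi=z$ and $$\|\xi-y\|_{2,\theta}\le\sqrt{\tfrac{\|\theta\|_{1,\infty}}{2}}\,\|Ay-z\|_1 .$$ Moreover, $\|\xi-y\|_{2,\theta}\le\sqrt{\tfrac{\|\theta\|_{1,\infty}\,\|w^{-1}\|_1}{2}}\,\|Ay-z\|_{2,w}$, where $w^{-1}=(w_1^{-1},\dots,w_N^{-1})$.
   Context: Let $N,R$ be positive integers and $[N]=\{1,\dots,N\}$. For each $r\in[R]$, $F_r:2^{[N]}\to\mathbb{R}$ is a submodular function with $F_r(\emptyset)=0$. For $z\in\mathbb{R}^N$ and $S\subseteq[N]$, $z(S)=\sum_{i\in S}z_i$. The base polytope of a normalized submodular $G$ on $[N]$ is $\{u\in\mathbb{R}^N: u(S)\le G(S)\ \forall S\subseteq[N],\ u([N])=G([N])\}$; $\mathcal{B}_r$ denotes the base polytope of $F_r$ and $\mathcal{B}=\mathcal{B}_1\times\cdots\times\mathcal{B}_R\subseteq(\mathbb{R}^N)^R$, with elements $y=(y_1,\dots,y_R)$ and $y_{r,i}$ the $i$-th coordinate of $y_r$. The linear map $A:(\mathbb{R}^N)^R\to\mathbb{R}^N$ is $Ay=\sum_{r}y_r$. An element $i\in[N]$ is incident to $F_r$ if there is $S\subseteq[N]\setminus\{i\}$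 with $F_r(S\cup\{i\})\neq F_r(S)$; $S_r$ is the set of elements incident to $F_r$. Assume every $i\in[N]$ lies in at least one $S_r$. For $w\in\mathbb{R}^N_{\ge 0}$, $\|z\|_{2,w}=\sqrt{\sum_i w_iz_i^2}$; for $\theta=(\theta_1,\dots,\theta_R)\in(\mathbb{R}^N_{\ge0})^R$ and $y\in(\mathbb{R}^N)^R$, $\|y\|_{2,\theta}=\sqrt{\sum_r\|y_r\|_{2,\theta_r}^2}$, and $\|\theta\|_{1,\infty}=\sum_{i\in[N]}\max_{r\in[R]:\,i\in S_r}\theta_{r,i}$. *)

theory Defs
  imports Complex_Main
begin

text \<open>Ground set [N] = {1..N}; vectors in R^N are functions nat => real,
  only coordinates in {1..N} matter. Families indexed by r in [R] = {1..R}.\<close>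

definition submodular_on :: "nat \<Rightarrow> (nat set \<Rightarrow> real) \<Rightarrow> bool" where
  "submodular_on N G \<longleftrightarrow>
     (\<forall>S T. S \<subseteq> {1..N} \<longrightarrow> T \<subseteq> {1..N} \<longrightarrow> G (S \<union> T) + G (S \<inter> T) \<le> G S + G T)"

definition setsum_vec :: "(nat \<Rightarrow> real) \<Rightarrow> nat set \<Rightarrow> real" where
  "setsum_vec z S = (\<Sum>i\<in>S. z i)"

definition base_polytope :: "nat \<Rightarrow> (nat set \<Rightarrow> real) \<Rightarrow> (nat \<Rightarrow> real) set" where
  "base_polytope N G = {u. (\<forall>S. S \<subseteq> {1..N} \<longrightarrow> setsum_vec u S \<le> G S)
                              \<and> setsum_vec u {1..N} = G {1..N}}"

definition prod_base :: "nat \<Rightarrow> nat \<Rightarrow> (nat \<Rightarrow> nat set \<Rightarrow> real) \<Rightarrow> (nat \<Rightarrow> nat \<Rightarrow> real) set" where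
  "prod_base N R F = {y. \<forall>r\<in>{1..R}. y r \<in> base_polytope N (F r)}"

definition opA :: "nat \<Rightarrow> (nat \<Rightarrow> nat \<Rightarrow> real) \<Rightarrow> nat \<Rightarrow> real" where
  "opA R y = (\<lambda>i. \<Sum>r\<in>{1..R}. y r i)"

definition incident :: "nat \<Rightarrow> (nat set \<Rightarrow> real) \<Rightarrow> nat \<Rightarrow> bool" where
  "incident N G i \<longleftrightarrow> (\<exists>S. S \<subseteq> {1..N} - {i} \<and> G (S \<union> {i}) \<noteq> G S)"

definition norm1 :: "nat \<Rightarrow> (nat \<Rightarrow> real) \<Rightarrow> real" where
  "norm1 N z = (\<Sum>i\<in>{1..N}. \<bar>z i\<bar>)"

definition norm2w :: "nat \<Rightarrow> (nat \<Rightarrow> real) \<Rightarrow> (nat \<Rightarrow> real) \<Rightarrow> real" where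
  "norm2w N w z = sqrt (\<Sum>i\<in>{1..N}. w i * (z i)\<^sup>2)"

definition norm2theta :: "nat \<Rightarrow> nat \<Rightarrow> (nat \<Rightarrow> nat \<Rightarrow> real) \<Rightarrow> (nat \<Rightarrow> nat \<Rightarrow> real) \<Rightarrow> real" where
  "norm2theta N R \<theta> y = sqrt (\<Sum>r\<in>{1..R}. (norm2w N (\<theta> r) (y r))\<^sup>2)"

definition norm1inf :: "nat \<Rightarrow> nat \<Rightarrow> (nat \<Rightarrow> nat set \<Rightarrow> real) \<Rightarrow> (nat \<Rightarrow> nat \<Rightarrow> real) \<Rightarrow> real" where
  "norm1inf N R F \<theta> = (\<Sum>i\<in>{1..N}. Max {\<theta> r i | r. r \<in> {1..R} \<and> incident N (F r) i})"

end

theory Submission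
  imports Defs "HOL-Analysis.Analysis"
begin


lemma tight_Un_Int:
  assumes sm: "submodular_on N G" and x: "x \<in> base_polytope N G"
    and S: "S \<subseteq> {1..N}" "setsum_vec x S = G S"
    and T: "T \<subseteq> {1..N}" "setsum_vec x T = G T"
  shows "setsum_vec x (S \<union> T) = G (S \<union> T) \<and> setsum_vec x (S \<inter> T) = G (S \<inter> T)"
proof -
  have fS: "finite S" "finite T" using S T finite_subset by auto
  have e: "setsum_vec x (S \<union> T) + setsum_vec x (S \<inter> T) = setsum_vec x S + setsum_vec x T"
    unfolding setsum_vec_def using sum.union_inter[OF fS] by simp
  have "G (S \<union> T) + G (S \<inter> T) \<le> G S + G T" using sm S T unfolding submodular_on_def by blast
  moreover have "setsum_vec x (S \<union> T) \<le> G (S \<union> T)" "setsum_vec x (S \<inter> T) \<le> G (S \<inter> T)"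
    using x S T unfolding base_polytope_def by (simp add: le_infI1)+
  ultimately show ?thesis using e S T by linarith
qed

lemma bp_bounds:
  assumes x: "x \<in> base_polytope N G" and i: "i \<in> {1..N}"
  shows "G {1..N} - G ({1..N} - {i}) \<le> x i \<and> x i \<le> G {i}"
proof -
  have "setsum_vec x {i} \<le> G {i}" using x i unfolding base_polytope_def by auto
  hence a: "x i \<le> G {i}" by (simp add: setsum_vec_def)
  have s: "setsum_vec x {1..N} = x i + setsum_vec x ({1..N} - {i})"
    unfolding setsum_vec_def using i by (simp add: sum.remove)
  have "setsum_vec x ({1..N} - {i}) \<le> G ({1..N} - {i})" using x unfolding base_polytope_def by auto
  moreover have "setsum_vec x {1..N} = G {1..N}" using x unfolding base_polytope_def by auto
  ultimately show ?thesis using a s by linarith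
qed

lemma bp_nonincident:
  assumes x: "x \<in> base_polytope N G" and i: "i \<in> {1..N}" and G0: "G {} = 0"
    and ni: "\<not> incident N G i"
  shows "x i = 0"
proof -
  have h1: "G ({} \<union> {i}) = G {}" using ni unfolding incident_def by blast
  have h2: "G (({1..N} - {i}) \<union> {i}) = G ({1..N} - {i})" using ni unfolding incident_def by blast
  have "({1..N} - {i}) \<union> {i} = {1..N}" using i by auto
  with h2 have "G {1..N} = G ({1..N} - {i})" by simp
  with bp_bounds[OF x i] h1 G0 show ?thesis by simp
qed

lemma compact_PiE_UNIV: "(\<And>i. compact (S i)) \<Longrightarrow> compact (PiE UNIV S)"
  using compactin_PiE[of "\<lambda>_. euclidean" UNIV S] euclidean_product_topology by (metis compactin_euclidean_iff)

lemma cont_eval2 [continuous_intros]: "continuous_on S (\<lambda>\<xi>::nat\<Rightarrow>nat\<Rightarrow>real. \<xi> r i)"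
proof -
  have "continuous_on UNIV (\<lambda>\<xi>::nat\<Rightarrow>nat\<Rightarrow>real. \<xi> r)" by simp
  hence "continuous_on UNIV (\<lambda>\<xi>::nat\<Rightarrow>nat\<Rightarrow>real. \<xi> r i)"
    by (rule continuous_on_product_then_coordinatewise)
  thus ?thesis using continuous_on_subset by blast
qed

lemma closed_const_imp: "(P \<Longrightarrow> closed {x. Q x}) \<Longrightarrow> closed {x. P \<longrightarrow> Q x}"
  by (cases P) auto

lemma tight_sep:
  assumes sm: "submodular_on N G" and x: "x \<in> base_polytope N G"
    and fin: "finite Qs" and p: "p \<in> {1..N}"
    and h: "\<forall>q\<in>Qs. \<exists>T. T \<subseteq> {1..N} \<and> setsum_vec x T = G T \<and> p \<in> T \<and> q \<notin> T"
  shows "\<exists>T. T \<subseteq> {1..N} \<and> setsum_vec x T = G T \<and> p \<in> T \<and> T \<inter> Qs = {}"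
  using fin h
proof (induction Qs rule: finite_induct)
  case empty
  then show ?case using x p unfolding base_polytope_def by auto
next
  case (insert q Qs)
  then obtain T1 where T1: "T1 \<subseteq> {1..N}" "setsum_vec x T1 = G T1" "p \<in> T1" "T1 \<inter> Qs = {}" by auto
  obtain T2 where T2: "T2 \<subseteq> {1..N}" "setsum_vec x T2 = G T2" "p \<in> T2" "q \<notin> T2"
    using insert.prems by auto
  have "setsum_vec x (T1 \<inter> T2) = G (T1 \<inter> T2)" using tight_Un_Int[OF sm x T1(1,2) T2(1,2)] by blast
  then show ?case using T1 T2 by (intro exI[of _ "T1 \<inter> T2"]) auto
qed

lemma tight_cover:
  assumes sm: "submodular_on N G" and x: "x \<in> base_polytope N G" and G0: "G {} = 0"
    and fin: "finite W" and WU: "W \<subseteq> U"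
    and h: "\<forall>p\<in>W. \<exists>T. T \<subseteq> {1..N} \<and> setsum_vec x T = G T \<and> p \<in> T \<and> T \<subseteq> U"
  shows "\<exists>T. T \<subseteq> {1..N} \<and> setsum_vec x T = G T \<and> W \<subseteq> T \<and> T \<subseteq> U"
  using fin WU h
proof (induction W rule: finite_induct)
  case empty
  then show ?case using G0 by (intro exI[of _ "{}"]) (auto simp: setsum_vec_def)
next
  case (insert p W)
  then obtain T1 where T1: "T1 \<subseteq> {1..N}" "setsum_vec x T1 = G T1" "W \<subseteq> T1" "T1 \<subseteq> U" by auto
  obtain T2 where T2: "T2 \<subseteq> {1..N}" "setsum_vec x T2 = G T2" "p \<in> T2" "T2 \<subseteq> U"
    using insert.prems by auto
  have "setsum_vec x (T1 \<union> T2) = G (T1 \<union> T2)" using tight_Un_Int[OF sm x T1(1,2) T2(1,2)] by blast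
  then show ?case using T1 T2 by (intro exI[of _ "T1 \<union> T2"]) auto
qed

lemma tight_set:
  assumes sm: "submodular_on N G" and x: "x \<in> base_polytope N G" and G0: "G {} = 0"
    and UX: "U \<subseteq> {1..N}"
    and h: "\<forall>p\<in>U. \<forall>q\<in>{1..N} - U. \<exists>T. T \<subseteq> {1..N} \<and> setsum_vec x T = G T \<and> p \<in> T \<and> q \<notin> T"
  shows "setsum_vec x U = G U"
proof -
  have "\<forall>p\<in>U. \<exists>T. T \<subseteq> {1..N} \<and> setsum_vec x T = G T \<and> p \<in> T \<and> T \<subseteq> U"
  proof
    fix p assume p: "p \<in> U"
    have pX: "p \<in> {1..N}" using p UX by auto
    have fin: "finite ({1..N} - U)" by simp
    obtain T where "T \<subseteq> {1..N}" "setsum_vec x T = G T" "p \<in> T" "T \<inter> ({1..N} - U) = {}"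
      using tight_sep[OF sm x fin pX bspec[OF h p]] by metis
    then show "\<exists>T. T \<subseteq> {1..N} \<and> setsum_vec x T = G T \<and> p \<in> T \<and> T \<subseteq> U" by blast
  qed
  moreover have "finite U" using UX finite_subset by blast
  ultimately obtain T where "T \<subseteq> {1..N}" "setsum_vec x T = G T" "U \<subseteq> T" "T \<subseteq> U"
    using tight_cover[OF sm x G0 _ order_refl] by metis
  then show ?thesis by auto
qed



definition pp :: "real \<Rightarrow> real" where "pp a = max a 0"
definition nn :: "real \<Rightarrow> real" where "nn a = max (- a) 0"

locale L =
  fixes N R :: nat and F :: "nat \<Rightarrow> nat set \<Rightarrow> real" and y :: "nat \<Rightarrow> nat \<Rightarrow> real" and z :: "nat \<Rightarrow> real"
  assumes sub: "\<forall>r\<in>{1..R}. submodular_on N (F r) \<and> F r {} = 0"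
    and yB: "y \<in> prod_base N R F"
    and zB: "z \<in> base_polytope N (\<lambda>S. \<Sum>r\<in>{1..R}. F r S)"
begin

definition res :: "(nat \<Rightarrow> nat \<Rightarrow> real) \<Rightarrow> nat \<Rightarrow> real" where
  "res \<xi> i = z i - opA R \<xi> i"

definition Q :: "(nat \<Rightarrow> nat \<Rightarrow> real) \<Rightarrow> real" where
  "Q \<xi> = (\<Sum>i\<in>{1..N}. pp (res \<xi> i))"

definition hop :: "(nat \<Rightarrow> nat \<Rightarrow> real) \<Rightarrow> nat \<Rightarrow> nat \<Rightarrow> nat \<Rightarrow> bool" where
  "hop \<xi> r p q \<longleftrightarrow> r \<in> {1..R} \<and> p \<in> {1..N} \<and> q \<in> {1..N} \<and> p \<noteq> q \<and>
     (\<forall>T. T \<subseteq> {1..N} \<longrightarrow> setsum_vec (\<xi> r) T = F r T \<longrightarrow> p \<in> T \<longrightarrow> q \<in> T)"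

definition walk :: "(nat \<Rightarrow> nat \<Rightarrow> real) \<Rightarrow> nat \<Rightarrow> (nat \<Rightarrow> nat) \<Rightarrow> (nat \<Rightarrow> nat) \<Rightarrow> bool" where
  "walk \<xi> k v rs \<longleftrightarrow> (\<forall>m<k. hop \<xi> (rs m) (v m) (v (Suc m)))"

lemma sum_res_zero:
  assumes "\<forall>r\<in>{1..R}. \<xi> r \<in> base_polytope N (F r)"
  shows "(\<Sum>i\<in>{1..N}. res \<xi> i) = 0"
proof -
  have "(\<Sum>i\<in>{1..N}. opA R \<xi> i) = (\<Sum>r\<in>{1..R}. setsum_vec (\<xi> r) {1..N})"
    unfolding opA_def setsum_vec_def by (rule sum.swap)
  also have "\<dots> = (\<Sum>r\<in>{1..R}. F r {1..N})"
    using assms unfolding base_polytope_def by (intro sum.cong) auto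
  also have "\<dots> = (\<Sum>i\<in>{1..N}. z i)" using zB unfolding base_polytope_def setsum_vec_def by auto
  finally show ?thesis unfolding res_def by (simp add: sum_subtractf)
qed

lemma exists_walk:
  assumes B: "\<forall>r\<in>{1..R}. \<xi> r \<in> base_polytope N (F r)" and Qp: "Q \<xi> > 0"
  shows "\<exists>k v rs. walk \<xi> k v rs \<and> v 0 \<in> {1..N} \<and> res \<xi> (v 0) > 0 \<and> res \<xi> (v k) < 0"
proof (rule ccontr)
  assume no: "\<not> ?thesis"
  define U where "U = {q. \<exists>k v rs. walk \<xi> k v rs \<and> v 0 \<in> {1..N} \<and> res \<xi> (v 0) > 0 \<and> v k = q}"
  have UX: "U \<subseteq> {1..N}"
  proof
    fix q assume "q \<in> U"
    then obtain k v rs where w: "walk \<xi> k v rs" "v 0 \<in> {1..N}" "v k = q" unfolding U_def by blast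
    show "q \<in> {1..N}"
    proof (cases k)
      case 0 then show ?thesis using w by simp
    next
      case (Suc k') then show ?thesis using w unfolding walk_def hop_def by auto
    qed
  qed
  have Ures: "\<forall>q\<in>U. res \<xi> q \<ge> 0" using no unfolding U_def by force
  obtain p where p: "p \<in> {1..N}" "res \<xi> p > 0"
  proof (rule ccontr)
    assume "\<not> thesis"
    then have "\<forall>i\<in>{1..N}. pp (res \<xi> i) = 0" using that unfolding pp_def by force
    then have "Q \<xi> = 0" unfolding Q_def by simp
    then show False using Qp by simp
  qed
  have pU: "p \<in> U" unfolding U_def using p by (intro CollectI exI[of _ 0] exI[of _ "\<lambda>_. p"]) (auto simp: walk_def)
  have clos: "q' \<in> U" if qU: "q \<in> U" and hq: "hop \<xi> r q q'" for q q' r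
  proof -
    obtain k v rs where w: "walk \<xi> k v rs" "v 0 \<in> {1..N}" "res \<xi> (v 0) > 0" "v k = q"
      using qU unfolding U_def by blast
    have "walk \<xi> (Suc k) (v(Suc k := q')) (rs(k := r))"
      using w hq unfolding walk_def by (auto simp: less_Suc_eq)
    then show ?thesis unfolding U_def using w by (intro CollectI exI[of _ "Suc k"]) auto
  qed
  have tight: "setsum_vec (\<xi> r) U = F r U" if r: "r \<in> {1..R}" for r
  proof (rule tight_set[OF _ _ _ UX])
    show "submodular_on N (F r)" "F r {} = 0" using sub r by auto
    show "\<xi> r \<in> base_polytope N (F r)" using B r by auto
    show "\<forall>p\<in>U. \<forall>q\<in>{1..N} - U. \<exists>T. T \<subseteq> {1..N} \<and> setsum_vec (\<xi> r) T = F r T \<and> p \<in> T \<and> q \<notin> T"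
    proof (intro ballI)
      fix p q assume pq: "p \<in> U" "q \<in> {1..N} - U"
      then have "\<not> hop \<xi> r p q" using clos by blast
      moreover have "p \<noteq> q" "p \<in> {1..N}" using pq UX by auto
      ultimately show "\<exists>T. T \<subseteq> {1..N} \<and> setsum_vec (\<xi> r) T = F r T \<and> p \<in> T \<and> q \<notin> T"
        using r pq unfolding hop_def by auto
    qed
  qed
  have "(\<Sum>i\<in>U. res \<xi> i) = setsum_vec z U - (\<Sum>r\<in>{1..R}. setsum_vec (\<xi> r) U)"
    unfolding res_def setsum_vec_def opA_def by (simp add: sum_subtractf sum.swap[of _ U])
  also have "\<dots> = setsum_vec z U - (\<Sum>r\<in>{1..R}. F r U)" using tight by simp
  also have "\<dots> \<le> 0" using zB UX unfolding base_polytope_def by auto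
  finally have le: "(\<Sum>i\<in>U. res \<xi> i) \<le> 0" .
  have "finite U" using UX finite_subset by blast
  then have "res \<xi> p \<le> (\<Sum>i\<in>U. res \<xi> i)" using member_le_sum[of p U "res \<xi>"] pU Ures by auto
  then show False using le p by simp
qed

lemma inj_walk_aux:
  "walk \<xi> k v rs \<Longrightarrow> v 0 \<in> {1..N} \<Longrightarrow> res \<xi> (v 0) > 0 \<Longrightarrow> res \<xi> (v k) < 0 \<Longrightarrow>
   \<exists>k v rs. walk \<xi> k v rs \<and> v 0 \<in> {1..N} \<and> res \<xi> (v 0) > 0 \<and> res \<xi> (v k) < 0 \<and> inj_on v {0..k}"
proof (induction k arbitrary: v rs rule: less_induct)
  case (less k)
  show ?case
  proof (cases "inj_on v {0..k}")
    case True then show ?thesis using less.prems by blast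
  next
    case False
    then obtain a b where ab: "a \<le> k" "b \<le> k" "a < b" "v a = v b"
      unfolding inj_on_def by (metis atLeastAtMost_iff linorder_neqE_nat)
    define d where "d = b - a"
    define v' where "v' = (\<lambda>m. if m \<le> a then v m else v (m + d))"
    define rs' where "rs' = (\<lambda>m. if m < a then rs m else rs (m + d))"
    have d: "d > 0" "a + d = b" "d \<le> k" using ab unfolding d_def by auto
    have vm: "v' m = v (m + d)" if "m \<ge> a" for m
      using that d ab unfolding v'_def by (cases "m = a") auto
    have w': "walk \<xi> (k - d) v' rs'"
      unfolding walk_def
    proof (intro allI impI)
      fix m assume m: "m < k - d"
      show "hop \<xi> (rs' m) (v' m) (v' (Suc m))"
      proof (cases "m < a")
        case True
        then show ?thesis using less.prems(1) m unfolding walk_def v'_def rs'_def by auto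
      next
        case False
        then have "v' m = v (m + d)" "v' (Suc m) = v (Suc (m + d))" "rs' m = rs (m + d)"
          using vm[of m] vm[of "Suc m"] unfolding rs'_def by auto
        moreover have "m + d < k" using m by simp
        ultimately show ?thesis using less.prems(1) unfolding walk_def by auto
      qed
    qed
    have v0: "v' 0 = v 0" unfolding v'_def by simp
    have vk: "v' (k - d) = v k"
    proof (cases "k - d \<le> a")
      case True
      then have "k = b" using ab d by linarith
      then show ?thesis using ab d True unfolding v'_def by auto
    next
      case False
      then show ?thesis using vm[of "k - d"] d by simp
    qed
    show ?thesis using less.IH[of "k - d" v' rs'] w' v0 vk less.prems d by simp
  qed
qed

lemma exists_inj_walk:
  assumes B: "\<forall>r\<in>{1..R}. \<xi> r \<in> base_polytope N (F r)" and Qp: "Q \<xi> > 0"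
  shows "\<exists>k v rs. walk \<xi> k v rs \<and> v 0 \<in> {1..N} \<and> res \<xi> (v 0) > 0 \<and> res \<xi> (v k) < 0 \<and> inj_on v {0..k}"
  using exists_walk[OF B Qp] inj_walk_aux by blast

end


context L begin

definition P :: real where "P = Q y"

definition K :: "(nat \<Rightarrow> nat \<Rightarrow> real) set" where
  "K = {\<xi>. (\<forall>r i. (r \<notin> {1..R} \<or> i \<notin> {1..N}) \<longrightarrow> \<xi> r i = 0)
         \<and> (\<forall>r\<in>{1..R}. \<xi> r \<in> base_polytope N (F r))
         \<and> (\<forall>i\<in>{1..N}. (\<Sum>r\<in>{1..R}. pp (\<xi> r i - y r i)) \<le> P - Q \<xi>
                       \<and> (\<Sum>r\<in>{1..R}. nn (\<xi> r i - y r i)) \<le> P - Q \<xi>)}"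

lemma sum_ind: "finite S \<Longrightarrow> (\<Sum>i\<in>S. (if i = a then 1 else 0)::real) = (if a \<in> S then 1 else 0)"
  by (simp add: sum.delta)

lemma card_ind_le1:
  fixes k :: nat
  assumes "\<And>m1 m2. m1 < k \<Longrightarrow> m2 < k \<Longrightarrow> f m1 = w \<Longrightarrow> f m2 = w \<Longrightarrow> m1 = m2"
  shows "(\<Sum>m<k. (if w = f m then 1 else 0)::real) \<le> 1"
proof -
  have "(\<Sum>m<k. (if w = f m then 1 else 0)::real) = real (card {m\<in>{..<k}. w = f m})"
  proof -
    have "(\<Sum>m\<in>{m\<in>{..<k}. w = f m}. (1::real)) = (\<Sum>m<k. (if w = f m then 1 else 0))"
      by (rule sum.inter_filter) simp
    then show ?thesis by simp
  qed
  moreover have "card {m\<in>{..<k}. w = f m} \<le> Suc 0"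
    by (subst card_le_Suc0_iff_eq) (auto intro: assms)
  ultimately show ?thesis by simp
qed

lemma sum_ite_aux: "finite S \<Longrightarrow> (\<Sum>i\<in>S. if c then (if i = a then 1 else 0) - (if i = b then 1 else 0) else 0::real)
   = (if c then (if a \<in> S then 1 else 0) - (if b \<in> S then 1 else 0) else 0)"
  by (cases c) (simp_all add: sum_subtractf sum.delta)

lemma sum_delta_conj: "a \<in> A \<Longrightarrow> finite A \<Longrightarrow> (\<Sum>r\<in>A. if a = r \<and> PP then 1 else 0::real) = (if PP then 1 else 0)"
  by (cases PP) (simp_all add: sum.delta)

lemma sum_delta_if: "a \<in> A \<Longrightarrow> finite A \<Longrightarrow> (\<Sum>r\<in>A. if a = r then c else 0::real) = c"
  by (simp add: sum.delta)

lemma DS_gen: "finite S \<Longrightarrow> (\<Sum>i\<in>S. \<Sum>m<k. (if rs m = r then (if i = v m then 1 else 0) - (if i = v (Suc m) then 1 else 0) else 0::real))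
   = (\<Sum>m<(k::nat). if rs m = r then (if v m \<in> S then 1 else 0) - (if v (Suc m) \<in> S then 1 else 0) else 0)"
  apply (subst sum.swap) apply (rule sum.cong[OF refl]) apply (rule sum_ite_aux) by assumption

lemma augment:
  assumes xK: "\<xi> \<in> K" and w: "walk \<xi> k v rs" and v0: "v 0 \<in> {1..N}"
    and r0: "res \<xi> (v 0) > 0" and rk: "res \<xi> (v k) < 0" and inj: "inj_on v {0..k}"
  shows "\<exists>\<xi>'\<in>K. Q \<xi>' < Q \<xi>"
proof -
  let ?X = "{1..N}" and ?Rs = "{1..R}"
  have hop: "rs m \<in> ?Rs \<and> v m \<in> ?X \<and> v (Suc m) \<in> ?X \<and>
     (\<forall>T. T \<subseteq> ?X \<longrightarrow> setsum_vec (\<xi> (rs m)) T = F (rs m) T \<longrightarrow> v m \<in> T \<longrightarrow> v (Suc m) \<in> T)"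
    if "m < k" for m using w that unfolding walk_def hop_def by blast
  have hR: "rs m \<in> ?Rs" and hV: "v m \<in> ?X" and hV': "v (Suc m) \<in> ?X" if "m < k" for m
    using hop[OF that] by blast+
  have hT: "v (Suc m) \<in> T" if "m < k" "T \<subseteq> ?X" "setsum_vec (\<xi> (rs m)) T = F (rs m) T" "v m \<in> T" for m T
    using hop[OF that(1)] that(2-4) by blast
  have v0k: "v 0 \<noteq> v k" using r0 rk by auto
  have kpos: "k > 0" using v0k by (cases k) auto
  have vkX: "v k \<in> ?X" using hop[of "k - 1"] kpos by simp
  have B: "\<forall>r\<in>?Rs. \<xi> r \<in> base_polytope N (F r)" using xK unfolding K_def by blast
  define D where "D = (\<lambda>r i. \<Sum>m<k. (if rs m = r then (if i = v m then 1 else 0) - (if i = v (Suc m) then 1 else 0) else 0::real))"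
  define SL where "SL = {(r,S). r \<in> ?Rs \<and> S \<subseteq> ?X \<and> setsum_vec (\<xi> r) S < F r S}"
  define \<delta> where "\<delta> = Min (insert 1 ((\<lambda>(r,S). F r S - setsum_vec (\<xi> r) S) ` SL))"
  have finSL: "finite SL" unfolding SL_def
    by (rule finite_subset[of _ "?Rs \<times> Pow ?X"]) auto
  have \<delta>pos: "\<delta> > 0" unfolding \<delta>_def using finSL by (auto simp: SL_def)
  have \<delta>le: "\<delta> \<le> F r S - setsum_vec (\<xi> r) S" if "(r,S) \<in> SL" for r S
    unfolding \<delta>_def using finSL that by (intro Min_le) force+
  define \<epsilon> where "\<epsilon> = min (min (res \<xi> (v 0)) (- res \<xi> (v k))) (\<delta> / (real k + 1))"
  have \<epsilon>pos: "\<epsilon> > 0" unfolding \<epsilon>_def using r0 rk \<delta>pos by auto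
  have \<epsilon>1: "\<epsilon> \<le> res \<xi> (v 0)" "\<epsilon> \<le> - res \<xi> (v k)" unfolding \<epsilon>_def by auto
  have \<epsilon>2: "\<epsilon> * real k < \<delta>"
  proof -
    have "\<epsilon> \<le> \<delta> / (real k + 1)" unfolding \<epsilon>_def by auto
    then have "\<epsilon> * (real k + 1) \<le> \<delta>" by (simp add: field_simps)
    then show ?thesis using \<epsilon>pos by (simp add: algebra_simps)
  qed
  define \<xi>' where "\<xi>' = (\<lambda>r i. \<xi> r i + \<epsilon> * D r i)"
  have DS: "(\<Sum>i\<in>S. D r i) = (\<Sum>m<k. (if rs m = r then (if v m \<in> S then 1 else 0) - (if v (Suc m) \<in> S then 1 else 0) else 0::real))"
    if "finite S" for r S
    unfolding D_def by (rule DS_gen) (rule that)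
  have DR: "(\<Sum>r\<in>?Rs. D r i) = (if i = v 0 then 1 else 0) - (if i = v k then 1 else 0)" for i
  proof -
    have "(\<Sum>r\<in>?Rs. D r i) = (\<Sum>m<k. (if i = v m then 1 else 0) - (if i = v (Suc m) then 1 else 0::real))"
      unfolding D_def
    proof (subst sum.swap, rule sum.cong[OF refl])
      fix m assume "m \<in> {..<k}"
      then have "rs m \<in> ?Rs" using hR by simp
      then show "(\<Sum>r\<in>?Rs. if rs m = r then (if i = v m then 1 else 0) - (if i = v (Suc m) then 1 else 0) else 0::real)
          = (if i = v m then 1 else 0) - (if i = v (Suc m) then 1 else 0)"
        by (rule sum_delta_if) simp
    qed
    also have "\<dots> = (if i = v 0 then 1 else 0) - (if i = v k then 1 else 0)"
      by (rule sum_lessThan_telescope')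
    finally show ?thesis .
  qed
  have zero: "\<xi>' r i = 0" if "r \<notin> ?Rs \<or> i \<notin> ?X" for r i
  proof -
    have "D r i = 0" unfolding D_def
    proof (intro sum.neutral ballI)
      fix m assume "m \<in> {..<k}"
      then have "rs m \<in> ?Rs" "v m \<in> ?X" "v (Suc m) \<in> ?X" using hR hV hV' by auto
      then show "(if rs m = r then (if i = v m then 1 else 0) - (if i = v (Suc m) then 1 else 0) else 0::real) = 0"
        using that by auto
    qed
    moreover have "\<xi> r i = 0" using xK that unfolding K_def by blast
    ultimately show ?thesis unfolding \<xi>'_def by simp
  qed
  have BP: "\<xi>' r \<in> base_polytope N (F r)" if r: "r \<in> ?Rs" for r
  proof -
    have ss: "setsum_vec (\<xi>' r) S = setsum_vec (\<xi> r) S + \<epsilon> * (\<Sum>i\<in>S. D r i)" for S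
      unfolding \<xi>'_def setsum_vec_def by (simp add: sum.distrib sum_distrib_left)
    have xr: "\<xi> r \<in> base_polytope N (F r)" using B r by blast
    have le: "setsum_vec (\<xi>' r) S \<le> F r S" if S: "S \<subseteq> ?X" for S
    proof (cases "setsum_vec (\<xi> r) S = F r S")
      case True
      have "(\<Sum>i\<in>S. D r i) \<le> 0"
        unfolding DS[OF finite_subset[OF S finite_atLeastAtMost]]
      proof (rule sum_nonpos)
        fix m assume "m \<in> {..<k}"
        then have "rs m = r \<Longrightarrow> v m \<in> S \<Longrightarrow> v (Suc m) \<in> S" using hT[of m S] True S by auto
        then show "(if rs m = r then (if v m \<in> S then 1 else 0) - (if v (Suc m) \<in> S then 1 else 0) else 0::real) \<le> 0"
          by auto
      qed
      then show ?thesis using ss[of S] True \<epsilon>pos by (simp add: mult_nonneg_nonpos)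
    next
      case False
      have "setsum_vec (\<xi> r) S \<le> F r S" using xr S unfolding base_polytope_def by blast
      then have sl: "setsum_vec (\<xi> r) S < F r S" using False by linarith
      then have "(r,S) \<in> SL" unfolding SL_def using r S by auto
      then have dl: "\<delta> \<le> F r S - setsum_vec (\<xi> r) S" by (rule \<delta>le)
      have "(\<Sum>i\<in>S. D r i) \<le> (\<Sum>m<k. (1::real))"
        unfolding DS[OF finite_subset[OF S finite_atLeastAtMost]]
        by (rule sum_mono) simp
      then have "(\<Sum>i\<in>S. D r i) \<le> real k" by simp
      then have "\<epsilon> * (\<Sum>i\<in>S. D r i) \<le> \<epsilon> * real k" using \<epsilon>pos by simp
      then show ?thesis using ss[of S] \<epsilon>2 dl by linarith
    qed
    have eq: "setsum_vec (\<xi>' r) ?X = F r ?X"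
    proof -
      have "(\<Sum>i\<in>?X. D r i) = 0"
        unfolding DS[OF finite_atLeastAtMost] by (rule sum.neutral) (use hV hV' in auto)
      then show ?thesis using ss[of ?X] xr unfolding base_polytope_def by simp
    qed
    show ?thesis unfolding base_polytope_def mem_Collect_eq using le eq by simp
  qed
  have res': "res \<xi>' i = res \<xi> i - \<epsilon> * ((if i = v 0 then 1 else 0) - (if i = v k then 1 else 0))" for i
  proof -
    have "opA R \<xi>' i = opA R \<xi> i + \<epsilon> * (\<Sum>r\<in>?Rs. D r i)"
      unfolding opA_def \<xi>'_def by (simp add: sum.distrib sum_distrib_left)
    then show ?thesis unfolding res_def DR by simp
  qed
  have pres: "pp (res \<xi>' i) = pp (res \<xi> i) - (if i = v 0 then \<epsilon> else 0)" for i
  proof (cases "i = v 0")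
    case True
    then have "res \<xi>' i = res \<xi> i - \<epsilon>" using res'[of i] v0k by simp
    then show ?thesis using True \<epsilon>1 r0 unfolding pp_def by simp
  next
    case False
    show ?thesis
    proof (cases "i = v k")
      case True
      then have "res \<xi>' i = res \<xi> i + \<epsilon>" using res'[of i] v0k by simp
      then show ?thesis using True False \<epsilon>1 rk unfolding pp_def by simp
    next
      case False2: False
      then show ?thesis using res'[of i] False by simp
    qed
  qed
  have Q': "Q \<xi>' = Q \<xi> - \<epsilon>"
    unfolding Q_def pres using v0 by (simp add: sum_subtractf sum.delta')
  have thr: "(\<Sum>r\<in>?Rs. pp (\<xi>' r i - y r i)) \<le> P - Q \<xi>' \<and> (\<Sum>r\<in>?Rs. nn (\<xi>' r i - y r i)) \<le> P - Q \<xi>'"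
    if i: "i \<in> ?X" for i
  proof -
    define Cp where "Cp = (\<lambda>r. \<Sum>m<k. (if rs m = r \<and> i = v m then 1 else 0::real))"
    define Cn where "Cn = (\<lambda>r. \<Sum>m<k. (if rs m = r \<and> i = v (Suc m) then 1 else 0::real))"
    have DCp: "D r i \<le> Cp r" for r unfolding D_def Cp_def by (intro sum_mono) auto
    have DCn: "- D r i \<le> Cn r" for r
    proof -
      have "- D r i = (\<Sum>m<k. - (if rs m = r then (if i = v m then 1 else 0) - (if i = v (Suc m) then 1 else 0) else 0::real))"
        unfolding D_def by (simp add: sum_negf)
      also have "\<dots> \<le> Cn r" unfolding Cn_def by (intro sum_mono) auto
      finally show ?thesis .
    qed
    have Cp0: "Cp r \<ge> 0" for r unfolding Cp_def by (intro sum_nonneg) auto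
    have Cn0: "Cn r \<ge> 0" for r unfolding Cn_def by (intro sum_nonneg) auto
    have sCp: "(\<Sum>r\<in>?Rs. Cp r) \<le> 1"
    proof -
      have "(\<Sum>r\<in>?Rs. Cp r) = (\<Sum>m<k. (if i = v m then 1 else 0::real))"
        unfolding Cp_def
      proof (subst sum.swap, rule sum.cong[OF refl])
        fix m assume "m \<in> {..<k}"
        then have "rs m \<in> ?Rs" using hR by simp
        then show "(\<Sum>r\<in>?Rs. if rs m = r \<and> i = v m then 1 else 0::real) = (if i = v m then 1 else 0)"
          by (rule sum_delta_conj) simp
      qed
      also have "\<dots> \<le> 1" by (rule card_ind_le1) (use inj in \<open>auto simp: inj_on_def\<close>)
      finally show ?thesis .
    qed
    have sCn: "(\<Sum>r\<in>?Rs. Cn r) \<le> 1"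
    proof -
      have "(\<Sum>r\<in>?Rs. Cn r) = (\<Sum>m<k. (if i = v (Suc m) then 1 else 0::real))"
        unfolding Cn_def
      proof (subst sum.swap, rule sum.cong[OF refl])
        fix m assume "m \<in> {..<k}"
        then have "rs m \<in> ?Rs" using hR by simp
        then show "(\<Sum>r\<in>?Rs. if rs m = r \<and> i = v (Suc m) then 1 else 0::real) = (if i = v (Suc m) then 1 else 0)"
          by (rule sum_delta_conj) simp
      qed
      also have "\<dots> \<le> 1"
      proof (rule card_ind_le1)
        fix m1 m2 assume "m1 < k" "m2 < k" "v (Suc m1) = i" "v (Suc m2) = i"
        then have "Suc m1 = Suc m2" using inj unfolding inj_on_def
          by (metis Suc_leI atLeastAtMost_iff le0)
        then show "m1 = m2" by simp
      qed
      finally show ?thesis .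
    qed
    have old: "(\<Sum>r\<in>?Rs. pp (\<xi> r i - y r i)) \<le> P - Q \<xi>" "(\<Sum>r\<in>?Rs. nn (\<xi> r i - y r i)) \<le> P - Q \<xi>"
      using xK i unfolding K_def by blast+
    have "(\<Sum>r\<in>?Rs. pp (\<xi>' r i - y r i)) \<le> (\<Sum>r\<in>?Rs. pp (\<xi> r i - y r i) + \<epsilon> * Cp r)"
    proof (intro sum_mono)
      fix r
      have "\<epsilon> * D r i \<le> \<epsilon> * Cp r" using DCp[of r] \<epsilon>pos by simp
      moreover have "\<epsilon> * Cp r \<ge> 0" using Cp0[of r] \<epsilon>pos by simp
      ultimately show "pp (\<xi>' r i - y r i) \<le> pp (\<xi> r i - y r i) + \<epsilon> * Cp r"
        unfolding \<xi>'_def pp_def by linarith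
    qed
    also have "\<dots> = (\<Sum>r\<in>?Rs. pp (\<xi> r i - y r i)) + \<epsilon> * (\<Sum>r\<in>?Rs. Cp r)"
      by (simp add: sum.distrib sum_distrib_left)
    also have "\<dots> \<le> P - Q \<xi> + \<epsilon>"
    proof -
      have "\<epsilon> * (\<Sum>r\<in>?Rs. Cp r) \<le> \<epsilon> * 1" using sCp \<epsilon>pos by (intro mult_left_mono) auto
      then show ?thesis using old by linarith
    qed
    finally have 1: "(\<Sum>r\<in>?Rs. pp (\<xi>' r i - y r i)) \<le> P - Q \<xi>'" using Q' by simp
    have "(\<Sum>r\<in>?Rs. nn (\<xi>' r i - y r i)) \<le> (\<Sum>r\<in>?Rs. nn (\<xi> r i - y r i) + \<epsilon> * Cn r)"
    proof (intro sum_mono)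
      fix r
      have "- (\<epsilon> * D r i) \<le> \<epsilon> * Cn r" using DCn[of r] \<epsilon>pos
        by (metis minus_mult_right mult_left_mono less_imp_le)
      moreover have "\<epsilon> * Cn r \<ge> 0" using Cn0[of r] \<epsilon>pos by simp
      ultimately show "nn (\<xi>' r i - y r i) \<le> nn (\<xi> r i - y r i) + \<epsilon> * Cn r"
        unfolding \<xi>'_def nn_def by linarith
    qed
    also have "\<dots> = (\<Sum>r\<in>?Rs. nn (\<xi> r i - y r i)) + \<epsilon> * (\<Sum>r\<in>?Rs. Cn r)"
      by (simp add: sum.distrib sum_distrib_left)
    also have "\<dots> \<le> P - Q \<xi> + \<epsilon>"
    proof -
      have "\<epsilon> * (\<Sum>r\<in>?Rs. Cn r) \<le> \<epsilon> * 1" using sCn \<epsilon>pos by (intro mult_left_mono) auto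
      then show ?thesis using old by linarith
    qed
    finally have 2: "(\<Sum>r\<in>?Rs. nn (\<xi>' r i - y r i)) \<le> P - Q \<xi>'" using Q' by simp
    show ?thesis using 1 2 by blast
  qed
  have "\<xi>' \<in> K" unfolding K_def using zero BP thr by blast
  moreover have "Q \<xi>' < Q \<xi>" using Q' \<epsilon>pos by simp
  ultimately show ?thesis by blast
qed

end


context L begin

lemma y0K:
  defines "y0 \<equiv> (\<lambda>r i. if r \<in> {1..R} \<and> i \<in> {1..N} then y r i else 0)"
  shows "y0 \<in> K"
proof -
  have sv: "setsum_vec (y0 r) S = setsum_vec (y r) S" if "r \<in> {1..R}" "S \<subseteq> {1..N}" for r S
    unfolding setsum_vec_def y0_def using that by (intro sum.cong) auto
  have bp: "y0 r \<in> base_polytope N (F r)" if r: "r \<in> {1..R}" for r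
  proof -
    have "y r \<in> base_polytope N (F r)" using yB r unfolding prod_base_def by blast
    then show ?thesis unfolding base_polytope_def using sv[OF r] by simp
  qed
  have op: "opA R y0 i = opA R y i" if "i \<in> {1..N}" for i
    unfolding opA_def y0_def using that by (intro sum.cong) auto
  have Q0: "Q y0 = P" unfolding P_def Q_def res_def using op by (intro sum.cong) auto
  have th: "(\<Sum>r\<in>{1..R}. pp (y0 r i - y r i)) = 0" "(\<Sum>r\<in>{1..R}. nn (y0 r i - y r i)) = 0"
    if "i \<in> {1..N}" for i
    using that unfolding y0_def pp_def nn_def by (auto intro!: sum.neutral)
  have z0: "\<forall>r i. (r \<notin> {1..R} \<or> i \<notin> {1..N}) \<longrightarrow> y0 r i = 0" unfolding y0_def by auto
  show ?thesis unfolding K_def mem_Collect_eq using z0 bp th Q0 by simp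
qed

lemma K_closed: "closed K"
proof -
  have eqK: "K = {\<xi>. (\<forall>r. \<forall>i. (r \<notin> {1..R} \<or> i \<notin> {1..N}) \<longrightarrow> \<xi> r i = 0)
         \<and> (\<forall>r. r \<in> {1..R} \<longrightarrow> (\<forall>S. S \<subseteq> {1..N} \<longrightarrow> (\<Sum>i\<in>S. \<xi> r i) \<le> F r S) \<and> (\<Sum>i\<in>{1..N}. \<xi> r i) = F r {1..N})
         \<and> (\<forall>i. i \<in> {1..N} \<longrightarrow> (\<Sum>r\<in>{1..R}. max (\<xi> r i - y r i) 0) \<le> P - (\<Sum>i\<in>{1..N}. max (z i - (\<Sum>r\<in>{1..R}. \<xi> r i)) 0)
                       \<and> (\<Sum>r\<in>{1..R}. max (- (\<xi> r i - y r i)) 0) \<le> P - (\<Sum>i\<in>{1..N}. max (z i - (\<Sum>r\<in>{1..R}. \<xi> r i)) 0))}"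
    unfolding K_def base_polytope_def setsum_vec_def Q_def res_def opA_def pp_def nn_def by auto
  show ?thesis unfolding eqK
    by (intro closed_Collect_conj closed_Collect_all closed_const_imp closed_Collect_le closed_Collect_eq continuous_intros)
qed

lemma K_compact: "compact K"
proof -
  define lo where "lo = (\<lambda>r i. if r \<in> {1..R} \<and> i \<in> {1..N} then F r {1..N} - F r ({1..N} - {i}) else 0)"
  define hi where "hi = (\<lambda>r i. if r \<in> {1..R} \<and> i \<in> {1..N} then F r {i} else 0)"
  define Bx where "Bx = PiE UNIV (\<lambda>r. PiE UNIV (\<lambda>i. {lo r i..hi r i}))"
  have cB: "compact Bx" unfolding Bx_def by (intro compact_PiE_UNIV compact_Icc)
  have sub: "K \<subseteq> Bx"
  proof
    fix \<xi> assume x: "\<xi> \<in> K"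
    have "\<xi> r i \<in> {lo r i..hi r i}" for r i
    proof (cases "r \<in> {1..R} \<and> i \<in> {1..N}")
      case True
      then have "\<xi> r \<in> base_polytope N (F r)" using x unfolding K_def by blast
      then show ?thesis using bp_bounds[of "\<xi> r" N "F r" i] True unfolding lo_def hi_def by auto
    next
      case False
      then have "\<xi> r i = 0" using x unfolding K_def by blast
      then show ?thesis using False unfolding lo_def hi_def by auto
    qed
    then show "\<xi> \<in> Bx" unfolding Bx_def by (simp add: PiE_iff)
  qed
  have "K = Bx \<inter> K" using sub by blast
  then show ?thesis using compact_Int_closed[OF cB K_closed] by simp
qed

lemma Q_cont: "continuous_on S Q"
  unfolding Q_def res_def opA_def pp_def by (intro continuous_intros)

lemma exists_good: "\<exists>\<xi>\<in>K. Q \<xi> = 0"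
proof -
  have ne: "K \<noteq> {}" using y0K by blast
  obtain \<xi> where x: "\<xi> \<in> K" and opt: "\<forall>\<eta>\<in>K. Q \<xi> \<le> Q \<eta>"
    using continuous_attains_inf[OF K_compact ne Q_cont] by blast
  have Q0: "Q \<xi> \<ge> 0" unfolding Q_def pp_def by (intro sum_nonneg) auto
  have "\<not> Q \<xi> > 0"
  proof
    assume Qp: "Q \<xi> > 0"
    have B: "\<forall>r\<in>{1..R}. \<xi> r \<in> base_polytope N (F r)" using x unfolding K_def by blast
    obtain k v rs where "walk \<xi> k v rs" "v 0 \<in> {1..N}" "res \<xi> (v 0) > 0" "res \<xi> (v k) < 0" "inj_on v {0..k}"
      using exists_inj_walk[OF B Qp] by blast
    then obtain \<xi>' where "\<xi>' \<in> K" "Q \<xi>' < Q \<xi>" using augment[OF x] by blast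
    then show False using opt by force
  qed
  then show ?thesis using x Q0 by force
qed

end


lemma sq_sum_le:
  fixes f :: "'a \<Rightarrow> real"
  assumes "finite A" "\<forall>a\<in>A. f a \<ge> 0"
  shows "(\<Sum>a\<in>A. (f a)\<^sup>2) \<le> (\<Sum>a\<in>A. f a)\<^sup>2"
proof -
  have "(\<Sum>a\<in>A. (f a)\<^sup>2) \<le> (\<Sum>a\<in>A. f a * (\<Sum>b\<in>A. f b))"
  proof (rule sum_mono)
    fix a assume a: "a \<in> A"
    have "f a \<le> (\<Sum>b\<in>A. f b)" using member_le_sum[of a A f] assms a by auto
    then show "(f a)\<^sup>2 \<le> f a * (\<Sum>b\<in>A. f b)" using assms a
      by (simp add: power2_eq_square mult_left_mono)
  qed
  also have "\<dots> = (\<Sum>a\<in>A. f a)\<^sup>2" by (simp add: power2_eq_square sum_distrib_right)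
  finally show ?thesis .
qed

lemma sqrt_bound:
  fixes A b c :: real
  assumes "0 \<le> A" "A\<^sup>2 \<le> c * b\<^sup>2" "0 \<le> b" "0 \<le> c"
  shows "A \<le> sqrt c * b"
proof -
  have "A = sqrt (A\<^sup>2)" using assms by simp
  also have "\<dots> \<le> sqrt (c * b\<^sup>2)" using assms(2) by (rule real_sqrt_le_mono)
  also have "\<dots> = sqrt c * b" using assms by (simp add: real_sqrt_mult)
  finally show ?thesis .
qed

context L begin

lemma main_loc:
  "\<exists>\<xi>\<in>prod_base N R F. (\<forall>i\<in>{1..N}. opA R \<xi> i = z i) \<and>
     (\<forall>i\<in>{1..N}. (\<Sum>r\<in>{1..R}. pp (\<xi> r i - y r i)) \<le> P \<and> (\<Sum>r\<in>{1..R}. nn (\<xi> r i - y r i)) \<le> P)"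
proof -
  obtain \<xi> where x: "\<xi> \<in> K" and Q0: "Q \<xi> = 0" using exists_good by blast
  have B: "\<forall>r\<in>{1..R}. \<xi> r \<in> base_polytope N (F r)" using x unfolding K_def by blast
  have thr: "\<forall>i\<in>{1..N}. (\<Sum>r\<in>{1..R}. pp (\<xi> r i - y r i)) \<le> P - Q \<xi> \<and> (\<Sum>r\<in>{1..R}. nn (\<xi> r i - y r i)) \<le> P - Q \<xi>"
    using x unfolding K_def by blast
  have "\<forall>i\<in>{1..N}. pp (res \<xi> i) = 0"
    using Q0 unfolding Q_def by (subst (asm) sum_nonneg_eq_0_iff) (auto simp: pp_def)
  then have le: "\<forall>i\<in>{1..N}. res \<xi> i \<le> 0" unfolding pp_def by (metis max.absorb_iff2 max.commute)
  have "(\<Sum>i\<in>{1..N}. - res \<xi> i) = 0" using sum_res_zero[OF B] by (simp add: sum_negf)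
  then have "\<forall>i\<in>{1..N}. - res \<xi> i = 0" using le by (subst (asm) sum_nonneg_eq_0_iff) auto
  then have op: "\<forall>i\<in>{1..N}. opA R \<xi> i = z i" unfolding res_def by simp
  show ?thesis using B op thr Q0 unfolding prod_base_def by auto
qed

lemma P_norm1: "norm1 N (\<lambda>i. opA R y i - z i) = 2 * P" and P_nonneg: "P \<ge> 0"
proof -
  have B: "\<forall>r\<in>{1..R}. y r \<in> base_polytope N (F r)" using yB unfolding prod_base_def by blast
  have "norm1 N (\<lambda>i. opA R y i - z i) = (\<Sum>i\<in>{1..N}. 2 * pp (res y i) - res y i)"
    unfolding norm1_def res_def pp_def by (intro sum.cong) (auto simp: max_def abs_if)
  also have "\<dots> = 2 * P" unfolding P_def Q_def using sum_res_zero[OF B]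
    by (simp add: sum_subtractf sum_distrib_left)
  finally show "norm1 N (\<lambda>i. opA R y i - z i) = 2 * P" .
  show "P \<ge> 0" unfolding P_def Q_def pp_def by (intro sum_nonneg) auto
qed

lemma bound:
  fixes \<theta> :: "nat \<Rightarrow> nat \<Rightarrow> real"
  assumes cover: "\<forall>i\<in>{1..N}. \<exists>r\<in>{1..R}. incident N (F r) i"
    and theta_pos: "\<forall>r\<in>{1..R}. \<forall>i\<in>{1..N}. \<theta> r i > 0"
    and xB: "\<xi> \<in> prod_base N R F"
    and thr: "\<forall>i\<in>{1..N}. (\<Sum>r\<in>{1..R}. pp (\<xi> r i - y r i)) \<le> P \<and> (\<Sum>r\<in>{1..R}. nn (\<xi> r i - y r i)) \<le> P"
  shows "(norm2theta N R \<theta> (\<lambda>r i. \<xi> r i - y r i))\<^sup>2 \<le> norm1inf N R F \<theta> / 2 * (2 * P)\<^sup>2"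
proof -
  define d where "d = (\<lambda>r i. \<xi> r i - y r i)"
  define M where "M = (\<lambda>i. Max {\<theta> r i | r. r \<in> {1..R} \<and> incident N (F r) i})"
  have n2: "(norm2w N (\<theta> r) (d r))\<^sup>2 = (\<Sum>i\<in>{1..N}. \<theta> r i * (d r i)\<^sup>2)" if r: "r \<in> {1..R}" for r
  proof -
    have "(\<Sum>i\<in>{1..N}. \<theta> r i * (d r i)\<^sup>2) \<ge> 0"
      using theta_pos r by (intro sum_nonneg) (simp add: less_imp_le)
    then show ?thesis unfolding norm2w_def by simp
  qed
  have "(norm2theta N R \<theta> d)\<^sup>2 = (\<Sum>r\<in>{1..R}. (norm2w N (\<theta> r) (d r))\<^sup>2)"
    unfolding norm2theta_def by (simp add: sum_nonneg)
  also have "\<dots> = (\<Sum>r\<in>{1..R}. \<Sum>i\<in>{1..N}. \<theta> r i * (d r i)\<^sup>2)" using n2 by (intro sum.cong) auto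
  also have "\<dots> = (\<Sum>i\<in>{1..N}. \<Sum>r\<in>{1..R}. \<theta> r i * (d r i)\<^sup>2)" by (rule sum.swap)
  also have "\<dots> \<le> (\<Sum>i\<in>{1..N}. M i * (2 * P\<^sup>2))"
  proof (rule sum_mono)
    fix i assume i: "i \<in> {1..N}"
    have fin: "finite {\<theta> r i | r. r \<in> {1..R} \<and> incident N (F r) i}" by simp
    have step1: "\<theta> r i * (d r i)\<^sup>2 \<le> M i * (d r i)\<^sup>2" if r: "r \<in> {1..R}" for r
    proof (cases "incident N (F r) i")
      case True
      then have "\<theta> r i \<le> M i" unfolding M_def using r by (intro Max_ge[OF fin]) blast
      then show ?thesis by (simp add: mult_right_mono)
    next
      case False
      have G0: "F r {} = 0" using sub r by blast
      have "\<xi> r \<in> base_polytope N (F r)" "y r \<in> base_polytope N (F r)"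
        using xB yB r unfolding prod_base_def by blast+
      then have "\<xi> r i = 0" "y r i = 0" using bp_nonincident[OF _ i G0 False] by blast+
      then show ?thesis unfolding d_def by simp
    qed
    have sq: "(d r i)\<^sup>2 = (pp (d r i))\<^sup>2 + (nn (d r i))\<^sup>2" for r
      unfolding pp_def nn_def by (cases "d r i \<ge> 0") (auto simp: max_def)
    have spp: "(\<Sum>r\<in>{1..R}. (pp (d r i))\<^sup>2) \<le> P\<^sup>2"
    proof -
      have "(\<Sum>r\<in>{1..R}. (pp (d r i))\<^sup>2) \<le> (\<Sum>r\<in>{1..R}. pp (d r i))\<^sup>2"
        by (rule sq_sum_le) (auto simp: pp_def)
      also have "\<dots> \<le> P\<^sup>2" using thr i unfolding d_def
        by (intro power_mono) (auto simp: pp_def intro!: sum_nonneg)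
      finally show ?thesis .
    qed
    have snn: "(\<Sum>r\<in>{1..R}. (nn (d r i))\<^sup>2) \<le> P\<^sup>2"
    proof -
      have "(\<Sum>r\<in>{1..R}. (nn (d r i))\<^sup>2) \<le> (\<Sum>r\<in>{1..R}. nn (d r i))\<^sup>2"
        by (rule sq_sum_le) (auto simp: nn_def)
      also have "\<dots> \<le> P\<^sup>2" using thr i unfolding d_def
        by (intro power_mono) (auto simp: nn_def intro!: sum_nonneg)
      finally show ?thesis .
    qed
    have Mpos: "M i \<ge> 0"
    proof -
      obtain r where r: "r \<in> {1..R}" "incident N (F r) i" using cover i by blast
      then have "\<theta> r i \<le> M i" unfolding M_def by (intro Max_ge[OF fin]) blast
      moreover have "\<theta> r i > 0" using theta_pos r i by blast
      ultimately show ?thesis by simp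
    qed
    have "(\<Sum>r\<in>{1..R}. \<theta> r i * (d r i)\<^sup>2) \<le> (\<Sum>r\<in>{1..R}. M i * (d r i)\<^sup>2)"
      using step1 by (intro sum_mono) auto
    also have "\<dots> = M i * ((\<Sum>r\<in>{1..R}. (pp (d r i))\<^sup>2) + (\<Sum>r\<in>{1..R}. (nn (d r i))\<^sup>2))"
      unfolding sq by (simp add: distrib_left sum.distrib sum_distrib_left)
    also have "\<dots> \<le> M i * (2 * P\<^sup>2)" using spp snn Mpos by (intro mult_left_mono) auto
    finally show "(\<Sum>r\<in>{1..R}. \<theta> r i * (d r i)\<^sup>2) \<le> M i * (2 * P\<^sup>2)" .
  qed
  also have "\<dots> = (\<Sum>i\<in>{1..N}. M i) * (2 * P\<^sup>2)" by (rule sum_distrib_right[symmetric])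
  also have "\<dots> = norm1inf N R F \<theta> / 2 * (2 * P)\<^sup>2"
    unfolding norm1inf_def M_def by (simp add: power2_eq_square)
  finally show ?thesis unfolding d_def .
qed

end

lemma norm1_le:
  assumes w_pos: "\<forall>i\<in>{1..N}. w i > 0"
  shows "(norm1 N e)\<^sup>2 \<le> norm1 N (\<lambda>i. inverse (w i)) * (norm2w N w e)\<^sup>2"
proof -
  have "norm1 N e = (\<Sum>i\<in>{1..N}. sqrt (inverse (w i)) * (sqrt (w i) * \<bar>e i\<bar>))"
    unfolding norm1_def
  proof (intro sum.cong refl)
    fix i assume "i \<in> {1..N}"
    then have wi: "w i > 0" using w_pos by blast
    have "sqrt (inverse (w i)) * sqrt (w i) = 1"
      using wi by (simp add: real_sqrt_mult[symmetric])
    then show "\<bar>e i\<bar> = sqrt (inverse (w i)) * (sqrt (w i) * \<bar>e i\<bar>)"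
      by (metis mult.assoc mult_1)
  qed
  then have "(norm1 N e)\<^sup>2 \<le> (\<Sum>i\<in>{1..N}. (sqrt (inverse (w i)))\<^sup>2) * (\<Sum>i\<in>{1..N}. (sqrt (w i) * \<bar>e i\<bar>)\<^sup>2)"
    using Cauchy_Schwarz_ineq_sum by simp
  also have "\<dots> = norm1 N (\<lambda>i. inverse (w i)) * (norm2w N w e)\<^sup>2"
  proof -
    have "(\<Sum>i\<in>{1..N}. (sqrt (inverse (w i)))\<^sup>2) = norm1 N (\<lambda>i. inverse (w i))"
      unfolding norm1_def
    proof (intro sum.cong refl)
      fix i assume "i \<in> {1..N}"
      then have wi: "w i > 0" using w_pos by blast
      then show "(sqrt (inverse (w i)))\<^sup>2 = \<bar>inverse (w i)\<bar>" by simp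
    qed
    moreover have "(\<Sum>i\<in>{1..N}. (sqrt (w i) * \<bar>e i\<bar>)\<^sup>2) = (norm2w N w e)\<^sup>2"
    proof -
      have "(\<Sum>i\<in>{1..N}. (sqrt (w i) * \<bar>e i\<bar>)\<^sup>2) = (\<Sum>i\<in>{1..N}. w i * (e i)\<^sup>2)"
        using w_pos by (intro sum.cong refl) (simp add: power_mult_distrib less_imp_le)
      moreover have "(\<Sum>i\<in>{1..N}. w i * (e i)\<^sup>2) \<ge> 0"
        using w_pos by (intro sum_nonneg) (simp add: less_imp_le)
      ultimately show ?thesis unfolding norm2w_def by simp
    qed
    ultimately show ?thesis by simp
  qed
  finally show ?thesis .
qed

theorem lemma3p1:
  fixes N R :: nat
    and F :: "nat \<Rightarrow> nat set \<Rightarrow> real"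
    and \<theta> y :: "nat \<Rightarrow> nat \<Rightarrow> real"
    and w z :: "nat \<Rightarrow> real"
  assumes "N > 0" and "R > 0"
    and sub: "\<forall>r\<in>{1..R}. submodular_on N (F r) \<and> F r {} = 0"
    and cover: "\<forall>i\<in>{1..N}. \<exists>r\<in>{1..R}. incident N (F r) i"
    and theta_pos: "\<forall>r\<in>{1..R}. \<forall>i\<in>{1..N}. \<theta> r i > 0"
    and w_pos: "\<forall>i\<in>{1..N}. w i > 0"
    and y: "y \<in> prod_base N R F"
    and z: "z \<in> base_polytope N (\<lambda>S. \<Sum>r\<in>{1..R}. F r S)"
  shows "\<exists>\<xi>\<in>prod_base N R F.
           (\<forall>i\<in>{1..N}. opA R \<xi> i = z i)
         \<and> norm2theta N R \<theta> (\<lambda>r i. \<xi> r i - y r i)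
             \<le> sqrt (norm1inf N R F \<theta> / 2) * norm1 N (\<lambda>i. opA R y i - z i)
         \<and> norm2theta N R \<theta> (\<lambda>r i. \<xi> r i - y r i)
             \<le> sqrt (norm1inf N R F \<theta> * norm1 N (\<lambda>i. inverse (w i)) / 2)
                * norm2w N w (\<lambda>i. opA R y i - z i)"
proof -
  interpret L N R F y z using sub y z by unfold_locales
  obtain \<xi> where xB: "\<xi> \<in> prod_base N R F" and op: "\<forall>i\<in>{1..N}. opA R \<xi> i = z i"
    and thr: "\<forall>i\<in>{1..N}. (\<Sum>r\<in>{1..R}. pp (\<xi> r i - y r i)) \<le> P \<and> (\<Sum>r\<in>{1..R}. nn (\<xi> r i - y r i)) \<le> P"
    using main_loc by blast
  define A where "A = norm2theta N R \<theta> (\<lambda>r i. \<xi> r i - y r i)"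
  define T where "T = norm1inf N R F \<theta>"
  define W where "W = norm1 N (\<lambda>i. inverse (w i))"
  define e where "e = (\<lambda>i. opA R y i - z i)"
  have A0: "A \<ge> 0" unfolding A_def norm2theta_def by (intro real_sqrt_ge_zero sum_nonneg) simp
  have bd: "A\<^sup>2 \<le> T / 2 * (2 * P)\<^sup>2" unfolding A_def T_def by (rule bound[OF cover theta_pos xB thr])
  have T0: "T \<ge> 0"
  proof -
    have "A\<^sup>2 \<ge> 0" by simp
    have "T \<ge> 0"
      unfolding T_def norm1inf_def
    proof (intro sum_nonneg)
      fix i assume i: "i \<in> {1..N}"
      obtain r where r: "r \<in> {1..R}" "incident N (F r) i" using cover i by blast
      have fin: "finite {\<theta> r i | r. r \<in> {1..R} \<and> incident N (F r) i}" by simp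
      have "\<theta> r i \<le> Max {\<theta> r i | r. r \<in> {1..R} \<and> incident N (F r) i}" using r by (intro Max_ge[OF fin]) blast
      moreover have "\<theta> r i > 0" using theta_pos r i by blast
      ultimately show "0 \<le> Max {\<theta> r i | r. r \<in> {1..R} \<and> incident N (F r) i}" by simp
    qed
    then show ?thesis .
  qed
  have n1: "norm1 N e = 2 * P" unfolding e_def by (rule P_norm1)
  have first: "A \<le> sqrt (T / 2) * norm1 N e"
    using sqrt_bound[OF A0 _ _ ] bd n1 P_nonneg T0 by simp
  have W0: "W \<ge> 0" unfolding W_def norm1_def by (intro sum_nonneg) simp
  have cs: "(2 * P)\<^sup>2 \<le> W * (norm2w N w e)\<^sup>2" using norm1_le[OF w_pos, of e] n1 unfolding W_def by simp
  have "A\<^sup>2 \<le> T / 2 * (W * (norm2w N w e)\<^sup>2)"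
    using bd cs T0 by (meson order_trans mult_left_mono divide_nonneg_pos zero_less_numeral)
  then have "A\<^sup>2 \<le> (T * W / 2) * (norm2w N w e)\<^sup>2" by (simp add: algebra_simps)
  moreover have "norm2w N w e \<ge> 0" unfolding norm2w_def using w_pos
    by (intro real_sqrt_ge_zero sum_nonneg) (simp add: less_imp_le)
  ultimately have second: "A \<le> sqrt (T * W / 2) * norm2w N w e"
    using sqrt_bound[OF A0] T0 W0 by simp
  show ?thesis using xB op first second unfolding A_def T_def W_def e_def by blast
qed

end
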